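(* Let $G=(V,E)$ with weight $\mu$ be an infinite, connected, locally finite weighted graph satisfying condition $(p_0)$. Let $m\ge 3$ and $(p,q)\in G_{5.2}=\{(p,q): p+q=m-1,\ q<0\}$. Then the inequality $\Delta_m u+u^p|\nabla u|^q\le 0$ on $V$ admits no nontrivial positive solution (no volume growth assumption is imposed).
   Context: Setting: $G=(V,E)$ is an infinite, connected, locally finite graph with no loops and no multiple edges; $x\sim y$ means $x$ and $y$ are joined by an edge. A weight is a symmetric function $\mu:V\times V\to[0,\infty)$ with $\mu_{xy}=\mu_{yx}>0$ if and only if $x\sim y$; the vertex measure is $\mu(x)=\sum_{y\sim x}\mu_{xy}$. For $m>1$ and $u:V\to\mathbb R$, $\Delta_m u(x)=\frac{1}{\mu(x)}\sum_{y\sim x}\mu_{xy}|u(y)-u(x)|^{m-2}(u(y)-u(x))$ and $|\nabla u(x)|=\big(\sum_{y\sim x}\frac{\mu_{xy}}{2\mu(x)}(u(y)-u(x))^2\big)^{1/2}$. Condition $(p_0)$: there is a constant $p_0>1$ such that $\mu_{xy}/\mu(x)\ge 1/p_0$ for all $x\sim y$. A nontrivial positive solution of $\Delta_m u+u^p|\nabla u|^q\le 0$ is a non-constant function $u:V\to(0,\infty)$ such that $\Delta_m u(x)+u(x)^p|\nabla u(x)|^q\le 0$ for every $x\in V$, with the conventions $0^0=1$, $0^q=0$ for $q>0$, and, for $q<0$, $|\nabla u(x)|^q=+\infty$ when $|\nabla u(x)|=0$ (so the inequality fails at such $x$). *)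

theory Defs
  imports "HOL-Analysis.Analysis"
begin

definition weighted_graph :: "('v \<Rightarrow> 'v \<Rightarrow> bool) \<Rightarrow> ('v \<Rightarrow> 'v \<Rightarrow> real) \<Rightarrow> bool" where
  "weighted_graph E mu \<longleftrightarrow>
     infinite (UNIV :: 'v set) \<and>
     (\<forall>x y. E x y \<longleftrightarrow> E y x) \<and>
     (\<forall>x. \<not> E x x) \<and>
     (\<forall>x. finite {y. E x y}) \<and>
     (\<forall>x y. E\<^sup>*\<^sup>* x y) \<and>
     (\<forall>x y. mu x y = mu y x) \<and>
     (\<forall>x y. mu x y \<ge> 0) \<and>
     (\<forall>x y. mu x y > 0 \<longleftrightarrow> E x y)"

definition vmeasure :: "('v \<Rightarrow> 'v \<Rightarrow> bool) \<Rightarrow> ('v \<Rightarrow> 'v \<Rightarrow> real) \<Rightarrow> 'v \<Rightarrow> real" where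
  "vmeasure E mu x = (\<Sum>y\<in>{y. E x y}. mu x y)"

definition cond_p0 :: "('v \<Rightarrow> 'v \<Rightarrow> bool) \<Rightarrow> ('v \<Rightarrow> 'v \<Rightarrow> real) \<Rightarrow> real \<Rightarrow> bool" where
  "cond_p0 E mu p0 \<longleftrightarrow> p0 > 1 \<and> (\<forall>x y. E x y \<longrightarrow> mu x y / vmeasure E mu x \<ge> 1 / p0)"

definition m_laplacian :: "('v \<Rightarrow> 'v \<Rightarrow> bool) \<Rightarrow> ('v \<Rightarrow> 'v \<Rightarrow> real) \<Rightarrow> real \<Rightarrow> ('v \<Rightarrow> real) \<Rightarrow> 'v \<Rightarrow> real" where
  "m_laplacian E mu m u x =
     (1 / vmeasure E mu x) *
     (\<Sum>y\<in>{y. E x y}. mu x y * \<bar>u y - u x\<bar> powr (m - 2) * (u y - u x))"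

definition grad_norm :: "('v \<Rightarrow> 'v \<Rightarrow> bool) \<Rightarrow> ('v \<Rightarrow> 'v \<Rightarrow> real) \<Rightarrow> ('v \<Rightarrow> real) \<Rightarrow> 'v \<Rightarrow> real" where
  "grad_norm E mu u x =
     sqrt (\<Sum>y\<in>{y. E x y}. mu x y / (2 * vmeasure E mu x) * (u y - u x)\<^sup>2)"

text \<open>Nontrivial positive solution of  Delta_m u + u^p |grad u|^q \<le> 0  for q < 0:
  at points with vanishing gradient |grad u|^q = +infinity, so the inequality fails;
  hence a solution needs positive gradient everywhere.\<close>
definition nontrivial_pos_solution_negq ::
  "('v \<Rightarrow> 'v \<Rightarrow> bool) \<Rightarrow> ('v \<Rightarrow> 'v \<Rightarrow> real) \<Rightarrow> real \<Rightarrow> real \<Rightarrow> real \<Rightarrow> ('v \<Rightarrow> real) \<Rightarrow> bool" where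
  "nontrivial_pos_solution_negq E mu m p q u \<longleftrightarrow>
     (\<exists>x y. u x \<noteq> u y) \<and>
     (\<forall>x. u x > 0) \<and>
     (\<forall>x. grad_norm E mu u x > 0 \<and>
          m_laplacian E mu m u x + u x powr p * grad_norm E mu u x powr q \<le> 0)"

end

theory Submission
  imports Defs
begin

lemma term1:
  fixes a d m :: real
  assumes a: "a > 0" and d: "d > - a" and m: "m \<ge> 3"
  shows "\<bar>d\<bar> powr (m - 2) * d > - (a powr (m - 1))"
proof (cases "d \<ge> 0")
  case True
  then have "\<bar>d\<bar> powr (m - 2) * d \<ge> 0" by simp
  moreover have "a powr (m - 1) > 0" using a by simp
  ultimately show ?thesis by linarith
next
  case False
  then have "\<bar>d\<bar> powr (m - 2) * d = - (\<bar>d\<bar> powr (m - 2) * \<bar>d\<bar>)" by simp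
  also have "\<bar>d\<bar> powr (m - 2) * \<bar>d\<bar> = \<bar>d\<bar> powr (m - 1)"
  proof -
    have "\<bar>d\<bar> powr (m - 1) = \<bar>d\<bar> powr ((m - 2) + 1)" by simp
    also have "\<dots> = \<bar>d\<bar> powr (m - 2) * \<bar>d\<bar> powr 1" by (rule powr_add)
    finally show ?thesis using False by simp
  qed
  finally have e: "\<bar>d\<bar> powr (m - 2) * d = - (\<bar>d\<bar> powr (m - 1))" .
  have "\<bar>d\<bar> powr (m - 1) < a powr (m - 1)"
    using False d m by (intro powr_less_mono2) auto
  then show ?thesis using e by linarith
qed

lemma term2:
  fixes a d m :: real
  assumes a: "a > 0" and d: "d > - a" and m: "m \<ge> 3"
  shows "\<bar>d\<bar> powr (m - 2) * d \<ge> a powr (m - 3) * d\<^sup>2 - 2 * a powr (m - 1)"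
proof -
  have am: "a powr (m - 3) * a\<^sup>2 = a powr (m - 1)"
  proof -
    have "a powr (m - 3) * a\<^sup>2 = a powr (m - 3) * a powr 2"
      using a by (simp add: powr_numeral)
    also have "\<dots> = a powr ((m - 3) + 2)" by (rule powr_add[symmetric])
    also have "\<dots> = a powr (m - 1)" by simp
    finally show ?thesis .
  qed
  show ?thesis
  proof (cases "d \<ge> a")
    case True
    have "\<bar>d\<bar> powr (m - 2) * d = d powr (m - 3) * d\<^sup>2"
    proof -
      have "d powr (m - 3) * d\<^sup>2 = d powr (m - 3) * d powr 2"
        using True a by (simp add: powr_numeral)
      also have "\<dots> = d powr ((m - 3) + 2)" by (rule powr_add[symmetric])
      also have "\<dots> = d powr ((m - 2) + 1)" by simp
      also have "\<dots> = d powr (m - 2) * d powr 1" by (rule powr_add)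
      finally show ?thesis using True a by simp
    qed
    moreover have "d powr (m - 3) \<ge> a powr (m - 3)"
      using True a m by (intro powr_mono2) auto
    moreover have "a powr (m - 1) > 0" using a by simp
    ultimately show ?thesis
      by (smt (verit) mult_right_mono zero_le_power2)
  next
    case False
    have "d\<^sup>2 \<le> a\<^sup>2" using False d a
      by (simp add: abs_le_square_iff[symmetric] abs_le_iff)
    then have "a powr (m - 3) * d\<^sup>2 \<le> a powr (m - 1)"
      using am by (metis mult_left_mono powr_ge_zero)
    then show ?thesis using term1[OF a d m] by linarith
  qed
qed

theorem mainTheorem6:
  fixes E :: "'v \<Rightarrow> 'v \<Rightarrow> bool" and mu :: "'v \<Rightarrow> 'v \<Rightarrow> real"
    and p0 m p q :: real
  assumes "weighted_graph E mu"
    and "cond_p0 E mu p0"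
    and "m \<ge> 3"
    and "p + q = m - 1"
    and "q < 0"
  shows "\<not> (\<exists>u. nontrivial_pos_solution_negq E mu m p q u)"
proof
  assume "\<exists>u. nontrivial_pos_solution_negq E mu m p q u"
  then obtain u where u: "nontrivial_pos_solution_negq E mu m p q u" by blast
  fix x :: 'v
  define N where "N = {y. E x y}"
  define a where "a = u x"
  define M where "M = vmeasure E mu x"
  define g where "g = grad_norm E mu u x"
  have fin: "finite N" using assms(1) unfolding weighted_graph_def N_def by blast
  have mupos: "\<And>y. y \<in> N \<Longrightarrow> mu x y > 0"
    using assms(1) unfolding weighted_graph_def N_def by blast
  have a: "a > 0" using u unfolding nontrivial_pos_solution_negq_def a_def by blast
  have g: "g > 0" and ineq: "m_laplacian E mu m u x + a powr p * g powr q \<le> 0"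
    using u unfolding nontrivial_pos_solution_negq_def a_def g_def by blast+
  have Ne: "N \<noteq> {}"
  proof
    assume "N = {}"
    then have "Collect (E x) = {}" unfolding N_def by simp
    then have "g = 0" unfolding g_def grad_norm_def by (simp only: sum.empty real_sqrt_zero)
    with g show False by simp
  qed
  have Mdef: "M = (\<Sum>y\<in>N. mu x y)" unfolding M_def vmeasure_def N_def by simp
  have M: "M > 0" unfolding Mdef using fin Ne mupos by (intro sum_pos) auto
  have dgt: "\<And>y. u y - a > - a" using u unfolding nontrivial_pos_solution_negq_def by auto
  define S where "S = (\<Sum>y\<in>N. mu x y * \<bar>u y - a\<bar> powr (m - 2) * (u y - a))"
  have lap: "m_laplacian E mu m u x = S / M"
    unfolding m_laplacian_def S_def M_def N_def a_def by simp
  have g2: "g\<^sup>2 = (\<Sum>y\<in>N. mu x y * (u y - a)\<^sup>2) / (2 * M)"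
  proof -
    have "g\<^sup>2 = (\<Sum>y\<in>N. mu x y / (2 * M) * (u y - a)\<^sup>2)"
    proof -
      have nn: "0 \<le> (\<Sum>y\<in>N. mu x y / (2 * M) * (u y - a)\<^sup>2)"
      proof (rule sum_nonneg)
        fix y assume "y \<in> N"
        then have "mu x y \<ge> 0" using mupos less_imp_le by blast
        then show "0 \<le> mu x y / (2 * M) * (u y - a)\<^sup>2" using M by simp
      qed
      show ?thesis unfolding g_def grad_norm_def
        using real_sqrt_pow2[OF nn] unfolding N_def M_def a_def by simp
    qed
    also have "\<dots> = (\<Sum>y\<in>N. mu x y * (u y - a)\<^sup>2) / (2 * M)"
      by (simp add: sum_divide_distrib)
    finally show ?thesis .
  qed
  have S1: "S > (\<Sum>y\<in>N. mu x y * (- (a powr (m - 1))))"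
    unfolding S_def using fin Ne
  proof (rule sum_strict_mono)
    fix y assume "y \<in> N"
    then have "mu x y > 0" using mupos by blast
    then show "mu x y * (- (a powr (m - 1))) < mu x y * \<bar>u y - a\<bar> powr (m - 2) * (u y - a)"
      using mult_strict_left_mono[OF term1[OF a dgt assms(3), of y]] by (simp add: mult.assoc)
  qed
  have S1': "S > - (a powr (m - 1)) * M"
    using S1 unfolding Mdef by (simp add: sum_distrib_right mult.commute sum_negf)
  have S2: "S \<ge> (\<Sum>y\<in>N. mu x y * (a powr (m - 3) * (u y - a)\<^sup>2 - 2 * a powr (m - 1)))"
    unfolding S_def using fin
    by (intro sum_mono) (auto simp: mupos less_imp_le term2[OF a dgt assms(3)] mult.assoc intro!: mult_left_mono)
  have S2': "S \<ge> a powr (m - 3) * (2 * M * g\<^sup>2) - 2 * a powr (m - 1) * M"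
  proof -
    have "(\<Sum>y\<in>N. mu x y * (a powr (m - 3) * (u y - a)\<^sup>2 - 2 * a powr (m - 1)))
       = a powr (m - 3) * (\<Sum>y\<in>N. mu x y * (u y - a)\<^sup>2) - 2 * a powr (m - 1) * M"
      unfolding Mdef by (simp add: algebra_simps sum_subtractf sum_distrib_left sum_distrib_right)
    moreover have "2 * M * g\<^sup>2 = (\<Sum>y\<in>N. mu x y * (u y - a)\<^sup>2)" using g2 M by simp
    ultimately show ?thesis using S2 by simp
  qed
  have pos: "a powr p * g powr q > 0" using a g by simp
  have Sneg: "S < 0" using ineq pos M lap
    by (smt (verit) divide_nonneg_pos)
  have am: "a powr (m - 3) * a\<^sup>2 = a powr (m - 1)"
  proof -
    have "a powr (m - 3) * a\<^sup>2 = a powr (m - 3) * a powr 2"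
      using a by (simp add: powr_numeral)
    also have "\<dots> = a powr ((m - 3) + 2)" by (rule powr_add[symmetric])
    also have "\<dots> = a powr (m - 1)" by simp
    finally show ?thesis .
  qed
  have "a powr (m - 3) * (2 * M * g\<^sup>2) < a powr (m - 3) * (2 * M * a\<^sup>2)"
    using S2' Sneg am by (simp add: algebra_simps)
  then have "g\<^sup>2 < a\<^sup>2" using M a by simp
  then have ga: "g < a" using g a by (smt (verit) power_mono)
  have "g powr q > a powr q" using ga g assms(5) by (intro powr_less_mono2_neg) auto
  then have "a powr p * g powr q > a powr p * a powr q" using a by simp
  also have "a powr p * a powr q = a powr (m - 1)" using assms(4) a by (simp add: powr_add[symmetric])
  finally have "S / M \<le> - (a powr (m - 1))" using ineq lap by linarith
  then have "S \<le> - (a powr (m - 1)) * M" using M by (simp add: divide_le_eq)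
  with S1' show False by linarith
qed

end
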